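(* Let $(\varphi_t)_{t\ge0}$ be a semigroup of analytic functions in the unit disk $\mathbb{D}$ and let $X$ be a Banach space of analytic functions on $\mathbb{D}$ on which each composition operator $C_t f=f\circ\varphi_t$ is bounded, such that (i) polynomials are dense in $X$; (ii) there is a constant $C>0$ such that if $f,g\in X$ and $|f|\le|g|$ on $\mathbb{D}$, then $\|f\|_X\le C\|g\|_X$; (iii) $M:=\limsup_{t\to0^+}\|C_t\|<+\infty$; (iv) the functions $\varphi_t$ ($t\ge0$) belong to $X$ and $\lim_{t\to0^+}\|\varphi_t-\varphi_0\|_X=0$. Then the semigroup of operators $(C_t)_{t\ge0}$ is strongly continuous on $X$, i.e. $\lim_{t\to0^+}\|f\circ\varphi_t-f\|_X=0$ for every $f\in X$.
   Context: A semigroup of analytic functions is a family $\{\varphi_t:t\ge0\}$ of analytic self-maps of $\mathbb{D}$ such that $\varphi_0$ is the identity, $\varphi_{t+s}=\varphi_t\circ\varphi_s$ for all $t,s\ge0$, and $\varphi_t\to\varphi_0$ uniformly on compact subsets of $\mathbb{D}$ as $t\to0^+$. *)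

theory Defs
  imports "HOL-Analysis.Analysis"
begin

abbreviation disk :: "complex set" where "disk \<equiv> ball 0 1"

text \<open>Functions on the disk are represented as functions complex \<Rightarrow> complex
  that vanish outside the disk (so equality of elements means equality on the disk).\<close>
definition restr :: "(complex \<Rightarrow> complex) \<Rightarrow> complex \<Rightarrow> complex" where
  "restr f = (\<lambda>z. if z \<in> disk then f z else 0)"

definition analytic_semigroup :: "(real \<Rightarrow> complex \<Rightarrow> complex) \<Rightarrow> bool" where
  "analytic_semigroup \<phi> \<longleftrightarrow>
     (\<forall>t\<ge>0. \<phi> t holomorphic_on disk \<and> \<phi> t ` disk \<subseteq> disk) \<and>
     (\<forall>z\<in>disk. \<phi> 0 z = z) \<and>
     (\<forall>t\<ge>0. \<forall>s\<ge>0. \<forall>z\<in>disk. \<phi> (t + s) z = \<phi> t (\<phi> s z)) \<and>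
     (\<forall>K. compact K \<and> K \<subseteq> disk \<longrightarrow> uniform_limit K \<phi> (\<phi> 0) (at_right 0))"

definition banach_fun_space ::
  "(complex \<Rightarrow> complex) set \<Rightarrow> ((complex \<Rightarrow> complex) \<Rightarrow> real) \<Rightarrow> bool" where
  "banach_fun_space X N \<longleftrightarrow>
     (\<forall>f\<in>X. f holomorphic_on disk \<and> (\<forall>z. z \<notin> disk \<longrightarrow> f z = 0)) \<and>
     (\<lambda>z. 0) \<in> X \<and> (\<forall>f\<in>X. \<forall>g\<in>X. (\<lambda>z. f z + g z) \<in> X) \<and> (\<forall>c. \<forall>f\<in>X. (\<lambda>z. c * f z) \<in> X) \<and>
     (\<forall>f\<in>X. N f \<ge> 0 \<and> (N f = 0 \<longleftrightarrow> f = (\<lambda>z. 0))) \<and>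
     (\<forall>c. \<forall>f\<in>X. N (\<lambda>z. c * f z) = norm c * N f) \<and>
     (\<forall>f\<in>X. \<forall>g\<in>X. N ((\<lambda>z. f z + g z)) \<le> N f + N g) \<and>
     (\<forall>u :: nat \<Rightarrow> complex \<Rightarrow> complex. (\<forall>n. u n \<in> X) \<and>
         (\<forall>e>0. \<exists>M. \<forall>m\<ge>M. \<forall>n\<ge>M. N (\<lambda>z. u m z - u n z) < e) \<longrightarrow>
         (\<exists>f\<in>X. (\<lambda>n. N (\<lambda>z. u n z - f z)) \<longlonglongrightarrow> 0))"

definition comp_op :: "(real \<Rightarrow> complex \<Rightarrow> complex) \<Rightarrow> real \<Rightarrow> (complex \<Rightarrow> complex) \<Rightarrow> complex \<Rightarrow> complex" where
  "comp_op \<phi> t f = restr (f \<circ> \<phi> t)"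

definition comp_opnorm ::
  "(complex \<Rightarrow> complex) set \<Rightarrow> ((complex \<Rightarrow> complex) \<Rightarrow> real) \<Rightarrow> (real \<Rightarrow> complex \<Rightarrow> complex) \<Rightarrow> real \<Rightarrow> real" where
  "comp_opnorm X N \<phi> t = Sup ((\<lambda>f. N (comp_op \<phi> t f)) ` {f \<in> X. N f \<le> 1})"

end

theory Submission
  imports Defs
begin

lemma bfs_sub_in:
  assumes b: "banach_fun_space X N" and f: "f \<in> X" and g: "g \<in> X"
  shows "(\<lambda>z. f z - g z) \<in> X"
proof -
  have m: "(\<lambda>z. (-1) * g z) \<in> X" using b g unfolding banach_fun_space_def by blast
  have add: "\<forall>f\<in>X. \<forall>g\<in>X. (\<lambda>z. f z + g z) \<in> X" using b unfolding banach_fun_space_def by blast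
  have "(\<lambda>z. f z + (\<lambda>z. (-1) * g z) z) \<in> X" by (rule add[rule_format, OF f m])
  thus ?thesis by simp
qed

lemma bfs_scale_in:
  assumes b: "banach_fun_space X N" and g: "g \<in> X"
  shows "(\<lambda>z. c * g z) \<in> X" "N (\<lambda>z. c * g z) = norm c * N g"
  using b g unfolding banach_fun_space_def by blast+

lemma bfs_tri:
  assumes b: "banach_fun_space X N" and f: "f \<in> X" and g: "g \<in> X"
  shows "N (\<lambda>z. f z + g z) \<le> N f + N g"
  using b f g unfolding banach_fun_space_def by blast

lemma bfs_nonneg:
  assumes b: "banach_fun_space X N" and f: "f \<in> X"
  shows "N f \<ge> 0"
  using b f unfolding banach_fun_space_def by blast

lemma bfs_zero:
  assumes b: "banach_fun_space X N" and f: "f \<in> X" and "N f = 0"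
  shows "f = (\<lambda>z. 0)"
  using assms unfolding banach_fun_space_def by blast

lemma bfs_restr:
  assumes b: "banach_fun_space X N" and f: "f \<in> X"
  shows "restr f = f"
  using b f unfolding banach_fun_space_def restr_def by (auto simp: fun_eq_iff)

lemma comp_op_scale: "comp_op \<phi> t (\<lambda>z. c * g z) = (\<lambda>z. c * comp_op \<phi> t g z)"
  by (auto simp: comp_op_def restr_def fun_eq_iff)

lemma comp_op_diff: "comp_op \<phi> t (\<lambda>z. f z - g z) = (\<lambda>z. comp_op \<phi> t f z - comp_op \<phi> t g z)"
  by (auto simp: comp_op_def restr_def fun_eq_iff)

lemma opnorm_bound:
  assumes b: "banach_fun_space X N"
    and comp_in: "\<forall>t\<ge>0. \<forall>f\<in>X. comp_op \<phi> t f \<in> X"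
    and comp_bdd: "\<forall>t\<ge>0. \<exists>B. \<forall>f\<in>X. N (comp_op \<phi> t f) \<le> B * N f"
    and t: "t \<ge> 0" and g: "g \<in> X"
  shows "N (comp_op \<phi> t g) \<le> comp_opnorm X N \<phi> t * N g"
proof -
  obtain B where B: "\<forall>f\<in>X. N (comp_op \<phi> t f) \<le> B * N f" using comp_bdd t by blast
  have bdd: "bdd_above ((\<lambda>f. N (comp_op \<phi> t f)) ` {f \<in> X. N f \<le> 1})"
  proof (rule bdd_aboveI2)
    fix f assume "f \<in> {f \<in> X. N f \<le> 1}"
    hence f: "f \<in> X" "N f \<le> 1" by auto
    have "N (comp_op \<phi> t f) \<le> B * N f" using B f by blast
    also have "\<dots> \<le> \<bar>B\<bar>" using f bfs_nonneg[OF b f(1)]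
    proof -
      have "B * N f \<le> \<bar>B\<bar> * N f" using bfs_nonneg[OF b f(1)] by (intro mult_right_mono) auto
      also have "\<dots> \<le> \<bar>B\<bar> * 1" using f(2) by (intro mult_left_mono) auto
      finally show ?thesis by simp
    qed
    finally show "N (comp_op \<phi> t f) \<le> \<bar>B\<bar>" .
  qed
  show ?thesis
  proof (cases "N g = 0")
    case True
    hence "g = (\<lambda>z. 0)" using bfs_zero b g by blast
    hence "comp_op \<phi> t g = (\<lambda>z. 0)" by (auto simp: comp_op_def restr_def fun_eq_iff)
    moreover have "N (\<lambda>z. 0) = 0" using b unfolding banach_fun_space_def by blast
    ultimately show ?thesis using True by simp
  next
    case False
    hence pos: "N g > 0" using bfs_nonneg[OF b g] by simp
    define c where "c = complex_of_real (1 / N g)"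
    have hX: "(\<lambda>z. c * g z) \<in> X" and hN: "N (\<lambda>z. c * g z) = norm c * N g"
      using bfs_scale_in[OF b g] by blast+
    have nc: "norm c = 1 / N g" using pos by (simp add: c_def norm_divide)
    have "N (\<lambda>z. c * g z) \<le> 1" using hN nc pos by simp
    hence "N (comp_op \<phi> t (\<lambda>z. c * g z)) \<le> comp_opnorm X N \<phi> t"
      unfolding comp_opnorm_def using hX by (intro cSUP_upper bdd) auto
    moreover have "N (comp_op \<phi> t (\<lambda>z. c * g z)) = norm c * N (comp_op \<phi> t g)"
      unfolding comp_op_scale using bfs_scale_in(2)[OF b] comp_in t g by blast
    ultimately have "N (comp_op \<phi> t g) / N g \<le> comp_opnorm X N \<phi> t" using nc by simp
    thus ?thesis using pos by (simp add: divide_le_eq)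
  qed
qed

lemma poly_lip:
  fixes p :: "complex poly"
  obtains K where "K \<ge> 0" "\<And>w z. w \<in> disk \<Longrightarrow> z \<in> disk \<Longrightarrow> norm (poly p w - poly p z) \<le> K * norm (w - z)"
proof -
  have "compact (poly (pderiv p) ` cball 0 1)"
    by (intro compact_continuous_image continuous_intros) auto
  then obtain B where B: "\<And>y. y \<in> poly (pderiv p) ` cball 0 1 \<Longrightarrow> norm y \<le> B"
    using compact_imp_bounded bounded_iff by metis
  have Bd: "\<And>z. z \<in> disk \<Longrightarrow> norm (poly (pderiv p) z) \<le> max B 0" 
  proof -
    fix z :: complex assume "z \<in> disk"
    hence "z \<in> cball 0 1" by auto
    hence "norm (poly (pderiv p) z) \<le> B" using B by blast
    thus "norm (poly (pderiv p) z) \<le> max B 0" by linarith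
  qed
  show ?thesis
  proof (rule that[of "max B 0"])
    fix w z assume "w \<in> disk" "z \<in> disk"
    moreover have d: "\<And>z. z \<in> ball 0 1 \<Longrightarrow> (poly p has_field_derivative poly (pderiv p) z) (at z within ball 0 1)"
      by (rule has_field_derivative_at_within[OF poly_DERIV])
    ultimately show "norm (poly p w - poly p z) \<le> max B 0 * norm (w - z)"
      using field_differentiable_bound[OF convex_ball d Bd] by blast
  qed auto
qed


lemma bfs_add_in:
  assumes b: "banach_fun_space X N" and f: "f \<in> X" and g: "g \<in> X"
  shows "(\<lambda>z. f z + g z) \<in> X"
  using assms unfolding banach_fun_space_def by blast

lemma bfs_sym:
  assumes b: "banach_fun_space X N" and f: "f \<in> X" and g: "g \<in> X"
  shows "N (\<lambda>z. g z - f z) = N (\<lambda>z. f z - g z)"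
proof -
  have "(\<lambda>z. g z - f z) = (\<lambda>z. (-1) * (\<lambda>z. f z - g z) z)" by (auto simp: fun_eq_iff)
  hence "N (\<lambda>z. g z - f z) = norm (-1::complex) * N (\<lambda>z. f z - g z)"
    using bfs_scale_in(2)[where c="-1", OF b bfs_sub_in[OF b f g]] by simp
  thus ?thesis by simp
qed

theorem proposition4p1:
  fixes \<phi> :: "real \<Rightarrow> complex \<Rightarrow> complex"
    and X :: "(complex \<Rightarrow> complex) set"
    and N :: "(complex \<Rightarrow> complex) \<Rightarrow> real"
  assumes semi: "analytic_semigroup \<phi>"
    and banach: "banach_fun_space X N"
    and comp_in: "\<forall>t\<ge>0. \<forall>f\<in>X. comp_op \<phi> t f \<in> X"
    and comp_bdd: "\<forall>t\<ge>0. \<exists>B. \<forall>f\<in>X. N (comp_op \<phi> t f) \<le> B * N f"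
    and poly_in: "\<forall>p :: complex poly. restr (poly p) \<in> X"
    and poly_dense: "\<forall>f\<in>X. \<forall>e>0. \<exists>p :: complex poly. N (\<lambda>z. f z - restr (poly p) z) < e"
    and lattice: "\<exists>C>0. \<forall>f\<in>X. \<forall>g\<in>X. (\<forall>z\<in>disk. norm (f z) \<le> norm (g z)) \<longrightarrow> N f \<le> C * N g"
    and limsup: "Limsup (at_right 0) (\<lambda>t. ereal (comp_opnorm X N \<phi> t)) < \<infinity>"
    and phi_in: "\<forall>t\<ge>0. restr (\<phi> t) \<in> X"
    and phi_cont: "((\<lambda>t. N (\<lambda>z. restr (\<phi> t) z - restr (\<phi> 0) z)) \<longlongrightarrow> 0) (at_right 0)"
  shows "\<forall>f\<in>X. ((\<lambda>t. N (\<lambda>z. comp_op \<phi> t f z - f z)) \<longlongrightarrow> 0) (at_right 0)"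
proof
  obtain C where C: "C > 0" and lat: "\<And>f g. f \<in> X \<Longrightarrow> g \<in> X \<Longrightarrow> (\<forall>z\<in>disk. norm (f z) \<le> norm (g z)) \<Longrightarrow> N f \<le> C * N g"
    using lattice by blast
  have maps: "\<And>t z. t \<ge> 0 \<Longrightarrow> z \<in> disk \<Longrightarrow> \<phi> t z \<in> disk"
    using semi unfolding analytic_semigroup_def by blast
  have id0: "\<And>z. z \<in> disk \<Longrightarrow> \<phi> 0 z = z"
    using semi unfolding analytic_semigroup_def by blast
  have evpos: "eventually (\<lambda>t::real. t > 0) (at_right 0)"
    by (simp add: eventually_at_right_less)
  define L where "L = Limsup (at_right 0) (\<lambda>t. ereal (comp_opnorm X N \<phi> t))"
  have "\<exists>M. L < ereal M"
  proof (cases L)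
    case (real r) thus ?thesis by (intro exI[of _ "r+1"]) auto
  next
    case PInf thus ?thesis using limsup L_def by simp
  next
    case MInf thus ?thesis by (intro exI[of _ 0]) auto
  qed
  then obtain M where "L < ereal M" by blast
  hence evM: "eventually (\<lambda>t. comp_opnorm X N \<phi> t < M) (at_right 0)"
    using Limsup_lessD[where y="ereal M" and F="at_right (0::real)" and f="\<lambda>t. ereal (comp_opnorm X N \<phi> t)"]
    unfolding L_def by simp
  define M' where "M' = max M 0"
  have M'0: "M' \<ge> 0" by (simp add: M'_def)
  have polyconv: "((\<lambda>t. N (\<lambda>z. comp_op \<phi> t (restr (poly p)) z - restr (poly p) z)) \<longlongrightarrow> 0) (at_right 0)"
    for p :: "complex poly"
  proof -
    obtain K where K0: "K \<ge> 0" and Kl: "\<And>w z. w \<in> disk \<Longrightarrow> z \<in> disk \<Longrightarrow> norm (poly p w - poly p z) \<le> K * norm (w - z)"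
      using poly_lip by blast
    define P where "P = restr (poly p)"
    have PX: "P \<in> X" using poly_in P_def by blast
    have bound: "N (\<lambda>z. comp_op \<phi> t P z - P z) \<le> C * K * N (\<lambda>z. restr (\<phi> t) z - restr (\<phi> 0) z)"
      if t: "t > 0" for t
    proof -
      define D where "D = (\<lambda>z. restr (\<phi> t) z - restr (\<phi> 0) z)"
      have DX: "D \<in> X" unfolding D_def using phi_in t by (intro bfs_sub_in[OF banach]) auto
      define G where "G = (\<lambda>z. complex_of_real K * D z)"
      have GX: "G \<in> X" and GN: "N G = K * N D" unfolding G_def using bfs_scale_in[OF banach DX] K0 by auto
      have FX: "(\<lambda>z. comp_op \<phi> t P z - P z) \<in> X" using comp_in t PX by (intro bfs_sub_in[OF banach]) auto
      have "\<forall>z\<in>disk. norm (comp_op \<phi> t P z - P z) \<le> norm (G z)"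
      proof
        fix z :: complex assume z: "z \<in> disk"
        have "comp_op \<phi> t P z - P z = poly p (\<phi> t z) - poly p z"
          using z maps[of t z] t by (simp add: comp_op_def restr_def P_def)
        also have "norm \<dots> \<le> K * norm (\<phi> t z - z)" using Kl maps[of t z] t z by simp
        also have "\<dots> = norm (G z)" using z id0[OF z] K0 by (simp add: G_def D_def restr_def norm_mult)
        finally show "norm (comp_op \<phi> t P z - P z) \<le> norm (G z)" .
      qed
      hence "N (\<lambda>z. comp_op \<phi> t P z - P z) \<le> C * N G" using lat FX GX by blast
      thus ?thesis using GN by (simp add: D_def mult.assoc)
    qed
    have lim: "((\<lambda>t. C * K * N (\<lambda>z. restr (\<phi> t) z - restr (\<phi> 0) z)) \<longlongrightarrow> 0) (at_right 0)"
      using tendsto_mult_right_zero[OF phi_cont] by simp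
    have ev1: "eventually (\<lambda>t. 0 \<le> N (\<lambda>z. comp_op \<phi> t P z - P z)) (at_right 0)"
      using evpos proof (rule eventually_mono)
      fix t :: real assume "t > 0"
      thus "0 \<le> N (\<lambda>z. comp_op \<phi> t P z - P z)"
        using comp_in PX by (intro bfs_nonneg[OF banach] bfs_sub_in[OF banach]) auto
    qed
    have ev2: "eventually (\<lambda>t. N (\<lambda>z. comp_op \<phi> t P z - P z) \<le> C * K * N (\<lambda>z. restr (\<phi> t) z - restr (\<phi> 0) z)) (at_right 0)"
      using evpos by (rule eventually_mono) (rule bound)
    have "((\<lambda>t. N (\<lambda>z. comp_op \<phi> t P z - P z)) \<longlongrightarrow> 0) (at_right 0)"
      by (rule tendsto_sandwich[OF ev1 ev2 tendsto_const lim])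
    thus ?thesis unfolding P_def .
  qed
  fix f assume fX: "f \<in> X"
  show "((\<lambda>t. N (\<lambda>z. comp_op \<phi> t f z - f z)) \<longlongrightarrow> 0) (at_right 0)"
    unfolding tendsto_iff
  proof (intro allI impI)
    fix e :: real assume e: "e > 0"
    define \<delta> where "\<delta> = e / (2 * (M' + 2))"
    have \<delta>0: "\<delta> > 0" using e M'0 by (simp add: \<delta>_def)
    obtain p :: "complex poly" where p: "N (\<lambda>z. f z - restr (poly p) z) < \<delta>"
      using poly_dense fX \<delta>0 by blast
    define P where "P = restr (poly p)"
    have PX: "P \<in> X" using poly_in P_def by blast
    define h where "h = (\<lambda>z. f z - P z)"
    have hX: "h \<in> X" unfolding h_def using fX PX by (rule bfs_sub_in[OF banach])
    have hN: "N h < \<delta>" using p by (simp add: h_def P_def)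
    have "eventually (\<lambda>t. dist (N (\<lambda>z. comp_op \<phi> t P z - P z)) 0 < e/2) (at_right 0)"
    proof -
      have h2: "e/2 > 0" using e by simp
      have h1: "\<forall>e>0. eventually (\<lambda>t. dist (N (\<lambda>z. comp_op \<phi> t P z - P z)) 0 < e) (at_right 0)"
        using polyconv[of p] unfolding tendsto_iff P_def .
      show ?thesis using h1[rule_format, OF h2] .
    qed
    with evpos evM show "eventually (\<lambda>t. dist (N (\<lambda>z. comp_op \<phi> t f z - f z)) 0 < e) (at_right 0)"
    proof (eventually_elim)
      case (elim t)
      hence t: "t > 0" and opM: "comp_opnorm X N \<phi> t < M"
        and B: "dist (N (\<lambda>z. comp_op \<phi> t P z - P z)) 0 < e/2" by auto
      define A where "A = comp_op \<phi> t h"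
      define Bf where "Bf = (\<lambda>z. comp_op \<phi> t P z - P z)"
      define Cf where "Cf = (\<lambda>z. P z - f z)"
      have AX: "A \<in> X" using comp_in t hX A_def by auto
      have BX: "Bf \<in> X" unfolding Bf_def using comp_in t PX by (intro bfs_sub_in[OF banach]) auto
      have CX: "Cf \<in> X" unfolding Cf_def using PX fX by (rule bfs_sub_in[OF banach])
      have ABX: "(\<lambda>z. A z + Bf z) \<in> X" using AX BX by (rule bfs_add_in[OF banach])
      have FX: "(\<lambda>z. comp_op \<phi> t f z - f z) \<in> X" using comp_in t fX by (intro bfs_sub_in[OF banach]) auto
      have eq: "(\<lambda>z. comp_op \<phi> t f z - f z) = (\<lambda>z. (\<lambda>z. A z + Bf z) z + Cf z)"
        unfolding A_def Bf_def Cf_def h_def comp_op_diff by (auto simp: fun_eq_iff)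
      have "N (\<lambda>z. comp_op \<phi> t f z - f z) \<le> N (\<lambda>z. A z + Bf z) + N Cf"
        unfolding eq by (rule bfs_tri[OF banach ABX CX])
      also have "\<dots> \<le> N A + N Bf + N Cf" using bfs_tri[OF banach AX BX] by simp
      also have "N Cf = N h" unfolding Cf_def h_def by (rule bfs_sym[OF banach fX PX])
      also have "N A \<le> comp_opnorm X N \<phi> t * N h"
        unfolding A_def using t hX by (intro opnorm_bound[OF banach comp_in comp_bdd]) auto
      also have "comp_opnorm X N \<phi> t * N h \<le> M' * N h"
        using opM bfs_nonneg[OF banach hX] by (intro mult_right_mono) (auto simp: M'_def)
      finally have le: "N (\<lambda>z. comp_op \<phi> t f z - f z) \<le> (M' + 1) * N h + N Bf"
        by (simp add: algebra_simps)
      have "(M' + 1) * N h \<le> (M' + 1) * \<delta>" using hN M'0 by (intro mult_left_mono) auto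
      also have "(M' + 1) * \<delta> < e / 2"
        using e M'0 by (simp add: \<delta>_def field_simps)
      finally have "N (\<lambda>z. comp_op \<phi> t f z - f z) < e" using le B by (simp add: Bf_def)
      thus ?case using bfs_nonneg[OF banach FX] by simp
    qed
  qed
qed

end
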